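(* Let $K$ be an algebraically closed field complete with respect to a non-archimedean absolute value $|\cdot|$, with valuation ring $\mathcal{O}$, maximal ideal $\mathfrak{m}$, residue field $k$, and let $\varphi\in K(z)$ have degree two with three distinct fixed points in $\mathbb{P}^1(K)$, with multipliers $\lambda_1,\lambda_2,\lambda_3$. Then the fixed points are not all repelling. Moreover: (A) if $\varphi$ has two repelling fixed points, the third is attracting; (B) if $\varphi$ has exactly one repelling fixed point, the other two are indifferent; (C) if $\varphi$ has no repelling fixed points, then either some pair $i\ne j$ satisfies $\tilde\lambda_i\tilde\lambda_j\ne\tilde1$, or $\tilde\lambda_1=\tilde\lambda_2=\tilde\lambda_3=\tilde1$.
   Context: A fixed point with multiplier $\lambda$ is attracting if $|\lambda|<1$, indifferent if $|\lambda|=1$, repelling if $|\lambda|>1$. For $x\in\mathcal{O}$, $\tilde x$ denotes its image in $k=\mathcal{O}/\mathfrak{m}$. *)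

theory Defs
  imports "HOL-Computational_Algebra.Polynomial_Factorial"
begin

definition nonarch_abs :: "('a::field \<Rightarrow> real) \<Rightarrow> bool" where
  "nonarch_abs v \<longleftrightarrow>
     (\<forall>x. 0 \<le> v x) \<and> (\<forall>x. v x = 0 \<longleftrightarrow> x = 0) \<and>
     (\<forall>x y. v (x * y) = v x * v y) \<and>
     (\<forall>x y. v (x + y) \<le> max (v x) (v y))"

definition abs_complete :: "('a::field \<Rightarrow> real) \<Rightarrow> bool" where
  "abs_complete v \<longleftrightarrow>
     (\<forall>s :: nat \<Rightarrow> 'a.
        (\<forall>e>0. \<exists>N. \<forall>m\<ge>N. \<forall>n\<ge>N. v (s m - s n) < e) \<longrightarrow>
        (\<exists>L. \<forall>e>0. \<exists>N. \<forall>n\<ge>N. v (s n - L) < e))"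

definition alg_closed_field :: "'a::field itself \<Rightarrow> bool" where
  "alg_closed_field _ \<longleftrightarrow> (\<forall>p :: 'a poly. 1 \<le> degree p \<longrightarrow> (\<exists>x. poly p x = 0))"

text \<open>Points of P^1(K): Some z is the affine point z, None is infinity.
  A rational map is given by a pair (P,Q) of coprime polynomials, phi = P/Q;
  its degree is max (degree P) (degree Q).\<close>

definition rat_deg :: "'a::field poly \<Rightarrow> 'a poly \<Rightarrow> nat" where
  "rat_deg P Q = max (degree P) (degree Q)"

definition rat_app :: "'a::field poly \<Rightarrow> 'a poly \<Rightarrow> 'a option \<Rightarrow> 'a option" where
  "rat_app P Q x = (case x of
      Some z \<Rightarrow> (if poly Q z = 0 then None else Some (poly P z / poly Q z))
    | None \<Rightarrow> (if degree Q < degree P then None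
               else if degree P = degree Q then Some (lead_coeff P / lead_coeff Q)
               else Some 0))"

definition is_fixed_pt :: "'a::field poly \<Rightarrow> 'a poly \<Rightarrow> 'a option \<Rightarrow> bool" where
  "is_fixed_pt P Q x \<longleftrightarrow> rat_app P Q x = x"

text \<open>x^d p(1/x), for degree p \<le> d.\<close>
definition recip_poly :: "nat \<Rightarrow> 'a::field poly \<Rightarrow> 'a poly" where
  "recip_poly d p = (\<Sum>i\<le>d. monom (coeff p i) (d - i))"

text \<open>Multiplier phi'(z) at a finite fixed point; at infinity the multiplier
  is psi'(0) for the conjugate psi(w) = 1/phi(1/w) = recip Q / recip P.
  Derivatives are formal (= analytic) derivatives of rational functions.\<close>
definition multiplier :: "'a::field poly \<Rightarrow> 'a poly \<Rightarrow> 'a option \<Rightarrow> 'a" where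
  "multiplier P Q x = (case x of
      Some z \<Rightarrow> (poly (pderiv P) z * poly Q z - poly P z * poly (pderiv Q) z) / (poly Q z)^2
    | None \<Rightarrow> (let d = rat_deg P Q; A = recip_poly d P; B = recip_poly d Q in
               (poly (pderiv B) 0 * poly A 0 - poly B 0 * poly (pderiv A) 0) / (poly A 0)^2))"

text \<open>For x, y in the valuation ring O = {x. v x \<le> 1}: their images in the
  residue field k = O/m coincide iff x - y lies in m = {x. v x < 1}.\<close>
definition residue_eq :: "('a::field \<Rightarrow> real) \<Rightarrow> 'a \<Rightarrow> 'a \<Rightarrow> bool" where
  "residue_eq v x y \<longleftrightarrow> v (x - y) < 1"

end

theory Submission
  imports Defs
begin

lemma deg2_repr: "degree (p::'a::field poly) \<le> 2 \<Longrightarrow> p = [:coeff p 0, coeff p 1, coeff p 2:]"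
  by (auto simp: poly_eq_iff coeff_pCons coeff_eq_0 numeral_2_eq_2 split: nat.split)
lemma pderiv3: "poly (pderiv [:a,b,c:]) z = b + 2*c*z" for a b c z :: "'a::field"
  by (simp add: pderiv_pCons algebra_simps)
lemma caseA:
  fixes a b c p0 p1 p2 q0 q1 q2 :: "'a::field"
  assumes fa: "p0 + a*(p1 + a*p2) = a*(q0 + a*(q1 + a*q2))"
   and fb: "p0 + b*(p1 + b*p2) = b*(q0 + b*(q1 + b*q2))"
   and fc: "p0 + c*(p1 + c*p2) = c*(q0 + c*(q1 + c*q2))"
   and d: "a \<noteq> b" "a \<noteq> c" "b \<noteq> c"
  shows "p2 = q1 + q2*(a+b+c) \<and> p1 = q0 - q2*(a*b+b*c+c*a) \<and> p0 = q2*a*b*c"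
proof -
  have 1: "(a-b)*((p1-q0) + (p2-q1)*(a+b) - q2*(a*a+a*b+b*b)) = 0" using fa fb by algebra
  have 2: "(a-c)*((p1-q0) + (p2-q1)*(a+c) - q2*(a*a+a*c+c*c)) = 0" using fa fc by algebra
  have h1: "(p1-q0) + (p2-q1)*(a+b) - q2*(a*a+a*b+b*b) = 0" using 1 d by simp
  have h2: "(p1-q0) + (p2-q1)*(a+c) - q2*(a*a+a*c+c*c) = 0" using 2 d by simp
  have 3: "(b-c)*((p2-q1) - q2*(a+b+c)) = 0" using h1 h2 by algebra
  have h3: "p2 - q1 - q2*(a+b+c) = 0" using 3 d by simp
  have e2: "p2 = q1 + q2*(a+b+c)" using h3 by algebra
  have e1: "p1 = q0 - q2*(a*b+b*c+c*a)" using h1 e2 by algebra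
  have e0: "p0 = q2*a*b*c" using fa e1 e2 by algebra
  show ?thesis using e0 e1 e2 by simp
qed
lemma identA_poly:
  fixes a b c q0 q1 q2 :: "'a::comm_ring_1"
  defines "A \<equiv> q0 + a*(q1+a*q2)" and "B \<equiv> q0 + b*(q1+b*q2)" and "C \<equiv> q0 + c*(q1+c*q2)"
  shows "(A - q2*(a-b)*(a-c))*(B - q2*(b-a)*(b-c))*(C - q2*(c-a)*(c-b)) =
     (A - q2*(a-b)*(a-c))*B*C + (B - q2*(b-a)*(b-c))*A*C + (C - q2*(c-a)*(c-b))*A*B - 2*A*B*C"
  unfolding A_def B_def C_def by (simp add: algebra_simps)

definition R :: "'a::field \<Rightarrow> 'a \<Rightarrow> 'a \<Rightarrow> bool" where
  "R x y z \<longleftrightarrow> x*y*z = x+y+z-2"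

lemma R_swap12: "R x y z \<Longrightarrow> R y x z" by (simp add: R_def algebra_simps)
lemma R_swap23: "R x y z \<Longrightarrow> R x z y" by (simp add: R_def algebra_simps)

lemma polyP: "degree (p::'a::field poly) \<le> 2 \<Longrightarrow>
   poly p z = coeff p 0 + z*(coeff p 1 + z*coeff p 2) \<and>
   poly (pderiv p) z = coeff p 1 + 2*coeff p 2*z"
proof -
  assume "degree p \<le> 2"
  then have e: "p = [:coeff p 0, coeff p 1, coeff p 2:]" by (rule deg2_repr)
  show ?thesis by (subst (1 2) e, simp only: pderiv3, simp)
qed

lemma multA:
  fixes a p0 p1 p2 q0 q1 q2 :: "'a::field"
  assumes "A = q0 + a*(q1+a*q2)" "A \<noteq> 0" "p0 + a*(p1 + a*p2) = a*A"
  shows "((p1 + 2*p2*a)*A - (p0 + a*(p1 + a*p2))*(q1 + 2*q2*a))/A^2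
        = (p1 + 2*p2*a - a*(q1 + 2*q2*a))/A"
proof -
  have "((p1 + 2*p2*a)*A - (p0 + a*(p1 + a*p2))*(q1 + 2*q2*a))/A^2
     = (A*(p1 + 2*p2*a - a*(q1 + 2*q2*a)))/(A*A)"
    by (simp only: assms(3) power2_eq_square) (simp add: algebra_simps)
  also have "\<dots> = (p1 + 2*p2*a - a*(q1 + 2*q2*a))/A" using assms(2) by simp
  finally show ?thesis .
qed

lemma relAAA:
  fixes P Q :: "'a::field poly"
  assumes dP: "degree P \<le> 2" and dQ: "degree Q \<le> 2"
    and fa: "is_fixed_pt P Q (Some a)" and fb: "is_fixed_pt P Q (Some b)"
    and fc: "is_fixed_pt P Q (Some c)"
    and d: "a \<noteq> b" "a \<noteq> c" "b \<noteq> c"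
  shows "R (multiplier P Q (Some a)) (multiplier P Q (Some b)) (multiplier P Q (Some c))"
proof -
  define p0 p1 p2 q0 q1 q2 where "p0 = coeff P 0" "p1 = coeff P 1" "p2 = coeff P 2"
    "q0 = coeff Q 0" "q1 = coeff Q 1" "q2 = coeff Q 2"
  have hP: "\<And>z. poly P z = p0 + z*(p1 + z*p2) \<and> poly (pderiv P) z = p1 + 2*p2*z"
    using polyP[OF dP] unfolding p0_p1_p2_q0_q1_q2_def by blast
  have hQ: "\<And>z. poly Q z = q0 + z*(q1 + z*q2) \<and> poly (pderiv Q) z = q1 + 2*q2*z"
    using polyP[OF dQ] unfolding p0_p1_p2_q0_q1_q2_def by blast
  have fx: "poly Q z \<noteq> 0 \<and> poly P z = z * poly Q z" if "is_fixed_pt P Q (Some z)" for z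
    using that unfolding is_fixed_pt_def rat_app_def
    by (auto split: if_splits simp: field_simps)
  define A B C where "A = q0 + a*(q1+a*q2)" "B = q0 + b*(q1+b*q2)" "C = q0 + c*(q1+c*q2)"
  have A0: "A \<noteq> 0" and B0: "B \<noteq> 0" and C0: "C \<noteq> 0"
    using fx[OF fa] fx[OF fb] fx[OF fc] hQ unfolding A_B_C_def by auto
  have ea: "p0 + a*(p1 + a*p2) = a*A" and eb: "p0 + b*(p1 + b*p2) = b*B"
    and ec: "p0 + c*(p1 + c*p2) = c*C"
    using fx[OF fa] fx[OF fb] fx[OF fc] hP hQ unfolding A_B_C_def by auto
  have co: "p2 = q1 + q2*(a+b+c) \<and> p1 = q0 - q2*(a*b+b*c+c*a) \<and> p0 = q2*a*b*c"
    using caseA[of p0 a p1 p2 q0 q1 q2 b c] ea eb ec d unfolding A_B_C_def by auto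
  have la: "multiplier P Q (Some a) = (A - q2*(a-b)*(a-c))/A"
  proof -
    have "multiplier P Q (Some a) = ((p1 + 2*p2*a)*A - (p0 + a*(p1 + a*p2))*(q1 + 2*q2*a))/A^2"
      unfolding multiplier_def using hP hQ A_B_C_def by simp
    also have "\<dots> = (p1 + 2*p2*a - a*(q1 + 2*q2*a))/A"
      using multA A_B_C_def A0 ea by blast
    also have "\<dots> = (A - q2*(a-b)*(a-c))/A"
      using co unfolding A_B_C_def by (simp add: algebra_simps)
    finally show ?thesis .
  qed
  have lb: "multiplier P Q (Some b) = (B - q2*(b-a)*(b-c))/B"
  proof -
    have "multiplier P Q (Some b) = ((p1 + 2*p2*b)*B - (p0 + b*(p1 + b*p2))*(q1 + 2*q2*b))/B^2"
      unfolding multiplier_def using hP hQ A_B_C_def by simp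
    also have "\<dots> = (p1 + 2*p2*b - b*(q1 + 2*q2*b))/B"
      using multA A_B_C_def B0 eb by blast
    also have "\<dots> = (B - q2*(b-a)*(b-c))/B"
      using co unfolding A_B_C_def by (simp add: algebra_simps)
    finally show ?thesis .
  qed
  have lc: "multiplier P Q (Some c) = (C - q2*(c-a)*(c-b))/C"
  proof -
    have "multiplier P Q (Some c) = ((p1 + 2*p2*c)*C - (p0 + c*(p1 + c*p2))*(q1 + 2*q2*c))/C^2"
      unfolding multiplier_def using hP hQ A_B_C_def by simp
    also have "\<dots> = (p1 + 2*p2*c - c*(q1 + 2*q2*c))/C"
      using multA A_B_C_def C0 ec by blast
    also have "\<dots> = (C - q2*(c-a)*(c-b))/C"
      using co unfolding A_B_C_def by (simp add: algebra_simps)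
    finally show ?thesis .
  qed
  have id: "(A - q2*(a-b)*(a-c))*(B - q2*(b-a)*(b-c))*(C - q2*(c-a)*(c-b)) =
     (A - q2*(a-b)*(a-c))*B*C + (B - q2*(b-a)*(b-c))*A*C + (C - q2*(c-a)*(c-b))*A*B - 2*A*B*C"
    using identA_poly[of q0 a q1 q2 b c] unfolding A_B_C_def by simp
  show ?thesis unfolding R_def la lb lc using A0 B0 C0 id
    by (simp add: field_simps)
qed

lemma recip2: "degree (p::'a::field poly) \<le> 2 \<Longrightarrow> recip_poly 2 p = [:coeff p 2, coeff p 1, coeff p 0:]"
  unfolding recip_poly_def
  by (simp add: numeral_2_eq_2 atMost_Suc poly_eq_iff coeff_monom coeff_pCons split: nat.split)
lemma identB_poly:
  fixes a b q0 q1 p2 :: "'a::comm_ring_1"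
  defines "A \<equiv> q0 + a*q1" and "B \<equiv> q0 + b*q1" and "f \<equiv> p2 - q1"
  shows "(A + f*(a-b))*(B + f*(b-a))*q1 = (A + f*(a-b))*B*p2 + (B + f*(b-a))*A*p2 + q1*A*B - 2*A*B*p2"
  unfolding A_def B_def f_def by (simp add: algebra_simps)
lemma caseB:
  fixes a b p0 p1 p2 q0 q1 :: "'a::field"
  assumes fa: "p0 + a*(p1 + a*p2) = a*(q0 + a*q1)"
   and fb: "p0 + b*(p1 + b*p2) = b*(q0 + b*q1)"
   and d: "a \<noteq> b"
  shows "p1 = q0 - (p2-q1)*(a+b) \<and> p0 = (p2-q1)*a*b"
proof -
  have 1: "(a-b)*((p1-q0) + (p2-q1)*(a+b)) = 0" using fa fb by algebra
  have h1: "(p1-q0) + (p2-q1)*(a+b) = 0" using 1 d by simp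
  have e1: "p1 = q0 - (p2-q1)*(a+b)" using h1 by algebra
  have e0: "p0 = (p2-q1)*a*b" using fa e1 by algebra
  show ?thesis using e0 e1 by simp
qed

lemma relAAN:
  fixes P Q :: "'a::field poly"
  assumes rd: "rat_deg P Q = 2"
    and fa: "is_fixed_pt P Q (Some a)" and fb: "is_fixed_pt P Q (Some b)"
    and fn: "is_fixed_pt P Q None"
    and d: "a \<noteq> b"
  shows "R (multiplier P Q (Some a)) (multiplier P Q (Some b)) (multiplier P Q None)"
proof -
  have dP: "degree P \<le> 2" and dQ: "degree Q \<le> 2" using rd unfolding rat_deg_def by auto
  have lt: "degree Q < degree P" using fn unfolding is_fixed_pt_def rat_app_def
    by (auto split: if_splits)
  have dP2: "degree P = 2" using rd lt unfolding rat_deg_def by auto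
  define p0 p1 p2 q0 q1 q2 where "p0 = coeff P 0" "p1 = coeff P 1" "p2 = coeff P 2"
    "q0 = coeff Q 0" "q1 = coeff Q 1" "q2 = coeff Q 2"
  have q20: "q2 = 0" using lt dP2 unfolding p0_p1_p2_q0_q1_q2_def by (simp add: coeff_eq_0)
  have p2n: "p2 \<noteq> 0" using dP2 unfolding p0_p1_p2_q0_q1_q2_def
  proof -
    have "P \<noteq> 0" using dP2 by auto
    then have "coeff P (degree P) \<noteq> 0" by simp
    then show "coeff P 2 \<noteq> 0" using dP2 by simp
  qed
  have hP: "\<And>z. poly P z = p0 + z*(p1 + z*p2) \<and> poly (pderiv P) z = p1 + 2*p2*z"
    using polyP[OF dP] unfolding p0_p1_p2_q0_q1_q2_def by blast
  have hQ: "\<And>z. poly Q z = q0 + z*(q1 + z*q2) \<and> poly (pderiv Q) z = q1 + 2*q2*z"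
    using polyP[OF dQ] unfolding p0_p1_p2_q0_q1_q2_def by blast
  have fx: "poly Q z \<noteq> 0 \<and> poly P z = z * poly Q z" if "is_fixed_pt P Q (Some z)" for z
    using that unfolding is_fixed_pt_def rat_app_def
    by (auto split: if_splits simp: field_simps)
  define A B where "A = q0 + a*(q1+a*q2)" "B = q0 + b*(q1+b*q2)"
  have A0: "A \<noteq> 0" and B0: "B \<noteq> 0"
    using fx[OF fa] fx[OF fb] hQ unfolding A_B_def by auto
  have ea: "p0 + a*(p1 + a*p2) = a*A" and eb: "p0 + b*(p1 + b*p2) = b*B"
    using fx[OF fa] fx[OF fb] hP hQ unfolding A_B_def by auto
  have co: "p1 = q0 - (p2-q1)*(a+b) \<and> p0 = (p2-q1)*a*b"
    using caseB[of p0 a p1 p2 q0 q1 b] ea eb d q20 unfolding A_B_def by auto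
  have la: "multiplier P Q (Some a) = (A + (p2-q1)*(a-b))/A"
  proof -
    have "multiplier P Q (Some a) = ((p1 + 2*p2*a)*A - (p0 + a*(p1 + a*p2))*(q1 + 2*q2*a))/A^2"
      unfolding multiplier_def using hP hQ A_B_def by simp
    also have "\<dots> = (p1 + 2*p2*a - a*(q1 + 2*q2*a))/A"
      using multA A_B_def A0 ea by blast
    also have "\<dots> = (A + (p2-q1)*(a-b))/A"
      using co q20 unfolding A_B_def by (simp add: algebra_simps)
    finally show ?thesis .
  qed
  have lb: "multiplier P Q (Some b) = (B + (p2-q1)*(b-a))/B"
  proof -
    have "multiplier P Q (Some b) = ((p1 + 2*p2*b)*B - (p0 + b*(p1 + b*p2))*(q1 + 2*q2*b))/B^2"
      unfolding multiplier_def using hP hQ A_B_def by simp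
    also have "\<dots> = (p1 + 2*p2*b - b*(q1 + 2*q2*b))/B"
      using multA A_B_def B0 eb by blast
    also have "\<dots> = (B + (p2-q1)*(b-a))/B"
      using co q20 unfolding A_B_def by (simp add: algebra_simps)
    finally show ?thesis .
  qed
  have lc: "multiplier P Q None = q1/p2"
  proof -
    have "recip_poly 2 P = [:p2,p1,p0:]" "recip_poly 2 Q = [:q2,q1,q0:]"
      using recip2[OF dP] recip2[OF dQ] unfolding p0_p1_p2_q0_q1_q2_def by auto
    then show ?thesis unfolding multiplier_def Let_def rd using q20 p2n
      by (simp add: pderiv_pCons power2_eq_square)
  qed
  have id: "(A + (p2-q1)*(a-b))*(B + (p2-q1)*(b-a))*q1 = (A + (p2-q1)*(a-b))*B*p2
      + (B + (p2-q1)*(b-a))*A*p2 + q1*A*B - 2*A*B*p2"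
    unfolding A_B_def q20 by (simp add: algebra_simps)
  show ?thesis unfolding R_def la lb lc using A0 B0 p2n id
    by (simp add: field_simps)
qed

lemma relAll:
  fixes P Q :: "'a::field poly"
  assumes rd: "rat_deg P Q = 2"
    and fx: "is_fixed_pt P Q x" "is_fixed_pt P Q y" "is_fixed_pt P Q w"
    and d: "x \<noteq> y" "x \<noteq> w" "y \<noteq> w"
  shows "R (multiplier P Q x) (multiplier P Q y) (multiplier P Q w)"
proof -
  have dP: "degree P \<le> 2" and dQ: "degree Q \<le> 2" using rd unfolding rat_deg_def by auto
  show ?thesis
  proof (cases x)
    case None
    then obtain b c where yb: "y = Some b" and wc: "w = Some c" using d by (cases y; cases w) auto
    have "R (multiplier P Q (Some b)) (multiplier P Q (Some c)) (multiplier P Q None)"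
      using relAAN[OF rd, of b c] fx d None yb wc by simp
    then show ?thesis using None yb wc by (simp add: R_def algebra_simps)
  next
    case (Some a)
    note xa = Some
    show ?thesis
    proof (cases y)
      case None
      then obtain c where wc: "w = Some c" using d by (cases w) auto
      have "R (multiplier P Q (Some a)) (multiplier P Q (Some c)) (multiplier P Q None)"
        using relAAN[OF rd, of a c] fx d None xa wc by simp
      then show ?thesis using None xa wc by (simp add: R_def algebra_simps)
    next
      case (Some b)
      show ?thesis
      proof (cases w)
        case None
        then show ?thesis using relAAN[OF rd, of a b] fx d Some xa by simp
      next
        case (Some c)
        then show ?thesis using relAAA[OF dP dQ, of a b c] fx d xa \<open>y = Some b\<close> by auto
      qed
    qed
  qed
qed


lemma na:
  assumes "nonarch_abs v"
  shows na_nn: "0 \<le> v x" and na_z: "v x = 0 \<longleftrightarrow> x = 0" and na_mult: "v (x*y) = v x * v y"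
    and na_add: "v (x+y) \<le> max (v x) (v y)"
  using assms unfolding nonarch_abs_def by auto

lemma na_one: assumes "nonarch_abs v" shows "v 1 = 1"
proof -
  have "v 1 = v 1 * v 1" using na_mult[OF assms, of 1 1] by simp
  moreover have "v 1 \<noteq> 0" using na_z[OF assms, of 1] by simp
  ultimately show ?thesis by (metis mult_cancel_left1)
qed

lemma na_neg: assumes "nonarch_abs v" shows "v (-x) = v x"
proof -
  have "v (-1) * v (-1) = 1" using na_mult[OF assms, of "-1" "-1"] na_one[OF assms] by simp
  moreover have "0 \<le> v (-1)" using na_nn[OF assms] .
  ultimately have "v (-1) = 1"
  proof -
    assume a1: "v (-1) * v (-1) = 1" and a2: "0 \<le> v (-1)"
    have "(v (-1) - 1) * (v (-1) + 1) = 0" using a1 by (simp add: algebra_simps)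
    then show ?thesis using a2 by auto
  qed
  then show ?thesis using na_mult[OF assms, of "-1" x] by simp
qed

lemma na_diff: assumes "nonarch_abs v" shows "v (x - y) \<le> max (v x) (v y)"
  using na_add[OF assms, of x "-y"] na_neg[OF assms, of y] by simp

lemma na_two: assumes "nonarch_abs v" shows "v 2 \<le> 1"
proof -
  have e: "(2::'a) = 1 + 1" by simp
  have "v (1 + 1) \<le> max (v 1) (v 1)" by (rule na_add[OF assms])
  then show ?thesis unfolding e[symmetric] na_one[OF assms] by simp
qed

lemma na_strict: assumes "nonarch_abs v" "v x < v y" shows "v (x + y) = v y"
proof -
  have 1: "v (x+y) \<le> v y" using na_add[OF assms(1), of x y] assms(2) by simp
  have "v y \<le> max (v (x+y)) (v x)" using na_diff[OF assms(1), of "x+y" x] by simp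
  then have "v y \<le> v (x+y)" using assms(2) by auto
  then show ?thesis using 1 by simp
qed

lemma na_small_add: assumes "nonarch_abs v" "v x < 1" "v y < 1" shows "v (x+y) < 1"
  using na_add[OF assms(1), of x y] assms by simp
lemma na_small_diff: assumes "nonarch_abs v" "v x < 1" "v y < 1" shows "v (x-y) < 1"
  using na_diff[OF assms(1), of x y] assms by simp

lemma gt_mult: "1 < (x::real) \<Longrightarrow> 1 < y \<Longrightarrow> x < x*y \<and> y < x*y"
  using mult_strict_left_mono[of 1 y x] mult_strict_right_mono[of 1 x y] by auto

lemma V1:
  assumes na: "nonarch_abs v" and r: "R a b c" and h: "1 < v a" "1 < v b" "1 < v c"
  shows False
proof -
  have e: "a*b*c = ((a+b)+c) - 2" using r unfolding R_def by (simp add: algebra_simps)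
  have "v (((a+b)+c) - 2) \<le> max (max (max (v a) (v b)) (v c)) 1"
    using na_diff[OF na, of "(a+b)+c" 2] na_add[OF na, of "a+b" c] na_add[OF na, of a b] na_two[OF na]
    by linarith
  also have "\<dots> < v a * v b * v c"
  proof -
    have p: "v a * v b > v a" "v a * v b > v b" using gt_mult[of "v a" "v b"] h by blast+
    have q: "v a * v b * v c > v a * v b" "v a * v b * v c > v c"
      using gt_mult[of "v a * v b" "v c"] h p by linarith+
    show ?thesis unfolding max_less_iff_conj using h p q by linarith
  qed
  finally have X: "v (((a+b)+c) - 2) < v a * v b * v c" .
  have Y: "v (a*b*c) = v a * v b * v c" by (simp add: na_mult[OF na])
  have "v (a*b*c) < v a * v b * v c" using X by (simp only: e)
  then show False using Y by linarith
qed

lemma V2: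
  assumes na: "nonarch_abs v" and r: "R a b c" and h: "1 < v a" "1 < v b"
  shows "v c < 1"
proof -
  have e: "c*(a*b - 1) = (a + b) - 2" using r unfolding R_def by (simp add: algebra_simps)
  have p: "v a * v b > v a" "v a * v b > v b" using gt_mult[of "v a" "v b"] h by auto
  have "v (-1 + a*b) = v (a*b)"
    using na_strict[OF na, of "-1" "a*b"] na_neg[OF na, of 1] na_one[OF na] na_mult[OF na, of a b] p h by simp
  then have d: "v (a*b - 1) = v a * v b" using na_mult[OF na, of a b] by (simp add: algebra_simps)
  have "v ((a + b) - 2) \<le> max (max (v a) (v b)) 1"
    using na_diff[OF na, of "a+b" 2] na_add[OF na, of a b] na_two[OF na] by linarith
  also have "\<dots> < v a * v b" using p h by simp
  finally have "v c * (v a * v b) < v a * v b" using e d na_mult[OF na, of c "a*b-1"] by simp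
  then show ?thesis using p h by (simp add: mult_less_cancel_right2) 
qed

lemma V3:
  assumes na: "nonarch_abs v" and r: "R a b c" and h: "1 < v a" "v b \<le> 1" "v c \<le> 1"
  shows "v b = 1"
proof (rule ccontr)
  assume "v b \<noteq> 1"
  then have hb: "v b < 1" using h by simp
  have e: "c*(a*b - 1) = a + (b - 2)" using r unfolding R_def by (simp add: algebra_simps)
  have "v (b - 2) \<le> 1" using na_diff[OF na, of b 2] na_two[OF na] h by linarith
  then have r1: "v (b - 2 + a) = v a" using na_strict[OF na, of "b-2" a] h by simp
  have "v a * v b < v a" using hb h by simp
  then have "v (a*b - 1) < v a" using na_diff[OF na, of "a*b" 1] na_mult[OF na, of a b] na_one[OF na] h by linarith
  moreover have "v c * v (a*b - 1) \<le> v (a*b - 1)"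
    using h na_nn[OF na, of "a*b-1"] na_nn[OF na, of c] by (simp add: mult_left_le_one_le)
  ultimately have "v (c*(a*b - 1)) < v a" using na_mult[OF na] by simp
  then show False using e r1 by (simp add: add.commute)
qed

lemma V4:
  assumes na: "nonarch_abs v" and r: "R a b c" and h: "v a \<le> 1" "v b \<le> 1" "v c \<le> 1"
    and pab: "v (a*b - 1) < 1" and pac: "v (a*c - 1) < 1" and pbc: "v (b*c - 1) < 1"
  shows "v (a - 1) < 1"
proof -
  have one: "v 1 = 1" using na_one[OF na] .
  have u: "v (x*y) = 1" if "v (x*y - 1) < 1" for x y
    using na_strict[OF na, of "x*y-1" 1] that one by simp
  have un: "v x = 1" if "v (x*y) = 1" "v x \<le> 1" "v y \<le> 1" for x y
  proof (rule ccontr)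
    assume "v x \<noteq> 1" then have "v x < 1" using that by simp
    moreover have "v x * v y \<le> v x" using that na_nn[OF na, of y] na_nn[OF na, of x]
      by (simp add: mult_right_le_one_le)
    ultimately have "v x * v y < 1" by simp
    then show False using that na_mult[OF na, of x y] by simp
  qed
  have va: "v a = 1" using un[OF u[OF pab]] h by simp
  have vb: "v b = 1" using un[of b a] u[OF pab] h by (simp add: mult.commute)
  have vc: "v c = 1" using un[of c a] u[OF pac] h by (simp add: mult.commute)
  have "v (c*(a-b)) < 1"
  proof -
    have "c*(a-b) = (a*c - 1) - (b*c - 1)" by (simp add: algebra_simps)
    then show ?thesis using na_small_diff[OF na pac pbc] by simp
  qed
  then have dab: "v (a-b) < 1" using vc na_mult[OF na] by simp
  have "v (b*(a-c)) < 1"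
  proof -
    have "b*(a-c) = (a*b - 1) - (b*c - 1)" by (simp add: algebra_simps)
    then show ?thesis using na_small_diff[OF na pab pbc] by simp
  qed
  then have dac: "v (a-c) < 1" using vb na_mult[OF na] by simp
  have "v (a*(a-b)) < 1" using dab va na_mult[OF na] by simp
  then have k0: "v (a*(a-b) + (a*b - 1)) < 1" using na_small_add[OF na _ pab] by blast
  have k9: "a*(a-b) + (a*b - 1) = a*a - 1" by (simp add: algebra_simps)
  have sq: "v (a*a - 1) < 1" using k0 unfolding k9 .
  have k1: "v (a*((a*a - 1) - (b*c - 1))) < 1"
    using na_small_diff[OF na sq pbc] va na_mult[OF na] by simp
  have k2: "v (a*((a*a - 1) - (b*c - 1)) - (a-b)) < 1" by (rule na_small_diff[OF na k1 dab])
  have k3: "v (a*((a*a - 1) - (b*c - 1)) - (a-b) - (a-c)) < 1" by (rule na_small_diff[OF na k2 dac])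
  have k4: "a*((a*a - 1) - (b*c - 1)) - (a-b) - (a-c) = a*a*a - 3*a + 2"
    using r unfolding R_def by (simp add: algebra_simps)
  have cub: "v (a*a*a - 3*a + 2) < 1" using k3 unfolding k4 .
  have k5: "v (a*(a*a-1)) < 1" using sq va na_mult[OF na] by simp
  have k6: "v (a*(a*a-1) - (a*a*a - 3*a + 2)) < 1" by (rule na_small_diff[OF na k5 cub])
  have k7: "a*(a*a-1) - (a*a*a - 3*a + 2) = 2*(a-1)" by (simp add: algebra_simps)
  have t2: "v 2 * v (a-1) < 1" using k6 unfolding k7 na_mult[OF na] .
  have k8: "(a-1)*(a+1) = a*a - 1" by (simp add: algebra_simps)
  have t3: "v (a-1) * v (a+1) < 1" using sq unfolding k8[symmetric] na_mult[OF na] .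
  show ?thesis
  proof (rule ccontr)
    assume "\<not> v (a-1) < 1"
    then have g: "v (a-1) \<ge> 1" by simp
    have v2: "v 2 < 1"
    proof (rule ccontr)
      assume "\<not> v 2 < 1" then have "v 2 \<ge> 1" by simp
      then have "v 2 * v (a-1) \<ge> 1 * 1" using g by (intro mult_mono) auto
      then show False using t2 by simp
    qed
    have vp: "v (a+1) < 1"
    proof (rule ccontr)
      assume "\<not> v (a+1) < 1" then have "v (a+1) \<ge> 1" by simp
      then have "v (a-1) * v (a+1) \<ge> 1 * 1" using g by (intro mult_mono) auto
      then show False using t3 by simp
    qed
    have "v ((a+1) - 2) < 1" using na_small_diff[OF na vp v2] .
    moreover have "(a+1) - 2 = a - 1" by simp
    ultimately show False using g by simp
  qed
qed

theorem lemma3p3: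
  fixes v :: "'a::field \<Rightarrow> real"
    and P Q :: "'a poly"
    and fp :: "nat \<Rightarrow> 'a option"
  assumes "nonarch_abs v"
    and "abs_complete v"
    and "alg_closed_field TYPE('a)"
    and "coprime P Q"
    and "rat_deg P Q = 2"
    and "inj_on fp {0, 1, 2}"
    and "\<forall>i\<in>{0, 1, 2}. is_fixed_pt P Q (fp i)"
  defines "lam \<equiv> (\<lambda>i. multiplier P Q (fp i))"
  shows "\<not> (\<forall>i\<in>{0, 1, 2}. 1 < v (lam i))
    \<and> (\<forall>i\<in>{0, 1, 2}. \<forall>j\<in>{0, 1, 2}. \<forall>k\<in>{0, 1, 2}.
           i \<noteq> j \<and> j \<noteq> k \<and> i \<noteq> k \<and> 1 < v (lam i) \<and> 1 < v (lam j)
           \<longrightarrow> v (lam k) < 1)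
    \<and> (\<forall>i\<in>{0, 1, 2}. \<forall>j\<in>{0, 1, 2}. \<forall>k\<in>{0, 1, 2}.
           i \<noteq> j \<and> j \<noteq> k \<and> i \<noteq> k \<and> 1 < v (lam i) \<and> \<not> 1 < v (lam j) \<and> \<not> 1 < v (lam k)
           \<longrightarrow> v (lam j) = 1 \<and> v (lam k) = 1)
    \<and> ((\<forall>i\<in>{0, 1, 2}. \<not> 1 < v (lam i)) \<longrightarrow>
           (\<exists>i\<in>{0, 1, 2}. \<exists>j\<in>{0, 1, 2}. i \<noteq> j \<and> \<not> residue_eq v (lam i * lam j) 1)
           \<or> (\<forall>i\<in>{0, 1, 2}. residue_eq v (lam i) 1))"
proof -
  note na = assms(1)
  have Rijk: "R (lam i) (lam j) (lam k)" if "i \<in> {0,1,2}" "j \<in> {0,1,2}" "k \<in> {0,1,2}"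
    "i \<noteq> j" "j \<noteq> k" "i \<noteq> k" for i j k :: nat
  proof -
    have inj: "fp x = fp y \<Longrightarrow> x = y" if "x \<in> {0,1,2}" "y \<in> {0,1,2}" for x y
      using inj_onD[OF assms(6) _ that] by blast
    have d: "fp i \<noteq> fp j" "fp i \<noteq> fp k" "fp j \<noteq> fp k"
      using inj[of i j] inj[of i k] inj[of j k] that by auto
    have f: "is_fixed_pt P Q (fp i)" "is_fixed_pt P Q (fp j)" "is_fixed_pt P Q (fp k)"
      using assms(7) that(1-3) by auto
    show ?thesis unfolding lam_def by (rule relAll[OF assms(5) f d])
  qed
  have oth: "\<exists>j k. j \<in> {0,1,2} \<and> k \<in> {0,1,2} \<and> i \<noteq> j \<and> j \<noteq> k \<and> i \<noteq> k"
    if "i \<in> {0,1,2::nat}" for i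
  proof -
    from that have "i = 0 \<or> i = 1 \<or> i = 2" by auto
    then show ?thesis
    proof (elim disjE)
      assume "i = 0" then show ?thesis by (intro exI[of _ "1::nat"] exI[of _ "2::nat"]) simp
    next
      assume "i = 1" then show ?thesis by (intro exI[of _ "0::nat"] exI[of _ "2::nat"]) simp
    next
      assume "i = 2" then show ?thesis by (intro exI[of _ "0::nat"] exI[of _ "1::nat"]) simp
    qed
  qed
  have c1: "\<not> (\<forall>i\<in>{0, 1, 2}. 1 < v (lam i))"
  proof
    assume a: "\<forall>i\<in>{0, 1, 2}. 1 < v (lam i)"
    have "1 < v (lam 0)" "1 < v (lam 1)" "1 < v (lam 2)" using a by simp_all
    then show False using V1[OF na Rijk[of 0 1 2]] by simp
  qed
  have c2: "\<forall>i\<in>{0, 1, 2}. \<forall>j\<in>{0, 1, 2}. \<forall>k\<in>{0, 1, 2}.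
           i \<noteq> j \<and> j \<noteq> k \<and> i \<noteq> k \<and> 1 < v (lam i) \<and> 1 < v (lam j)
           \<longrightarrow> v (lam k) < 1"
  proof (intro ballI impI)
    fix i j k :: nat
    assume m: "i \<in> {0,1,2}" "j \<in> {0,1,2}" "k \<in> {0,1,2}"
      and h: "i \<noteq> j \<and> j \<noteq> k \<and> i \<noteq> k \<and> 1 < v (lam i) \<and> 1 < v (lam j)"
    have r1: "R (lam i) (lam j) (lam k)" using Rijk[OF m] h by blast
    show "v (lam k) < 1" using V2[OF na r1] h by blast
  qed
  have c3: "\<forall>i\<in>{0, 1, 2}. \<forall>j\<in>{0, 1, 2}. \<forall>k\<in>{0, 1, 2}.
           i \<noteq> j \<and> j \<noteq> k \<and> i \<noteq> k \<and> 1 < v (lam i) \<and> \<not> 1 < v (lam j) \<and> \<not> 1 < v (lam k)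
           \<longrightarrow> v (lam j) = 1 \<and> v (lam k) = 1"
  proof (intro ballI impI)
    fix i j k :: nat
    assume m: "i \<in> {0,1,2}" "j \<in> {0,1,2}" "k \<in> {0,1,2}"
      and h: "i \<noteq> j \<and> j \<noteq> k \<and> i \<noteq> k \<and> 1 < v (lam i) \<and> \<not> 1 < v (lam j) \<and> \<not> 1 < v (lam k)"
    have r1: "R (lam i) (lam j) (lam k)" using Rijk[OF m] h by blast
    have r2: "R (lam i) (lam k) (lam j)" using R_swap23[OF r1] .
    show "v (lam j) = 1 \<and> v (lam k) = 1"
      using V3[OF na r1] V3[OF na r2] h by simp
  qed
  have c4: "(\<forall>i\<in>{0, 1, 2}. \<not> 1 < v (lam i)) \<longrightarrow>
           (\<exists>i\<in>{0, 1, 2}. \<exists>j\<in>{0, 1, 2}. i \<noteq> j \<and> \<not> residue_eq v (lam i * lam j) 1)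
           \<or> (\<forall>i\<in>{0, 1, 2}. residue_eq v (lam i) 1)"
  proof (intro impI)
    assume nr: "\<forall>i\<in>{0, 1, 2}. \<not> 1 < v (lam i)"
    show "(\<exists>i\<in>{0, 1, 2}. \<exists>j\<in>{0, 1, 2}. i \<noteq> j \<and> \<not> residue_eq v (lam i * lam j) 1)
           \<or> (\<forall>i\<in>{0, 1, 2}. residue_eq v (lam i) 1)"
    proof (cases "\<exists>i\<in>{0, 1, 2}. \<exists>j\<in>{0, 1, 2}. i \<noteq> j \<and> \<not> residue_eq v (lam i * lam j) 1")
      case True then show ?thesis by blast
    next
      case False
      then have pr: "v (lam i * lam j - 1) < 1" if "i \<in> {0,1,2}" "j \<in> {0,1,2}" "i \<noteq> j" for i j
        using that unfolding residue_eq_def by blast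
      have "residue_eq v (lam i) 1" if mi: "i \<in> {0,1,2}" for i
      proof -
        obtain j k where jk: "j \<in> {0,1,2}" "k \<in> {0,1,2}" "i \<noteq> j" "j \<noteq> k" "i \<noteq> k"
          using oth[OF mi] by blast
        have r: "R (lam i) (lam j) (lam k)" using Rijk[OF mi jk(1,2) jk(3-5)] .
        have le: "v (lam i) \<le> 1" "v (lam j) \<le> 1" "v (lam k) \<le> 1"
          using nr mi jk(1,2) unfolding not_less[symmetric] by blast+
        show ?thesis unfolding residue_eq_def
          using V4[OF na r le pr[OF mi jk(1,3)] pr[OF mi jk(2,5)] pr[OF jk(1,2,4)]] .
      qed
      then show ?thesis by blast
    qed
  qed
  show ?thesis by (rule conjI[OF c1 conjI[OF c2 conjI[OF c3 c4]]])
qed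

end
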